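(* Assume (A.a). Let $\beta\in[0,1)$, $\lambda\in[0,\frac{\beta}{1-\beta}]$, and step sizes $\alpha_k\in\big(0,\frac{(1-\beta)(1-\beta^m)}{4Lm}\big]$ for all $k$, and let the sequences be generated by RRM. Let $\eta:=\frac{1+2\beta^m}{3}\in[\frac13,1)$. (a) For all $k\ge1$ (arbitrary permutations), \[ \|z^{k+1}-x^{k+1}\|^2\le\eta\|z^k-x^k\|^2+\frac{\beta^2m^2\alpha_k^2\{4\|\nabla f(z^k)\|^2+7L[f(z^k)-\bar f]\}}{(1-\beta)^2(1-\beta^m)}. \] (b) If in addition (A.c) holds, then for all $k\ge1$, \[ \mathbb E_k[\|z^{k+1}-x^{k+1}\|^2]\le\eta\|z^k-x^k\|^2+\frac{\beta^2m^2\alpha_k^2\{4\|\nabla f(z^k)\|^2+7n^{-1}L[f(z^k)-\bar f]\}}{(1-\beta)^2(1-\beta^m)}. \]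
   Context: Let $n,d\in\mathbb N$, $f_1,\dots,f_n:\mathbb R^d\to\mathbb R$ continuously differentiable, $f:=\frac1n\sum_{i=1}^n f_i$, $[n]:=\{1,\dots,n\}$. Fix a mini-batch size $b\in\mathbb N$ with $m:=n/b\in\mathbb N$. Random reshuffling with momentum (RRM) with step sizes $\{\alpha_k\}_{k\ge1}\subset(0,\infty)$ and parameters $\beta,\lambda$ generates sequences as follows: start with $x^1=\tilde x^1\in\mathbb R^d$; for each $k=1,2,\dots$ choose a permutation $\pi^k=(\pi^k_1,\dots,\pi^k_n)$ of $[n]$, set $y_0^k=\tilde x^k$, $y_1^k=x^k$, and for $i=1,\dots,m$ compute $\hat y_i^k=y_i^k+\lambda(y_i^k-y_{i-1}^k)$, $d_i^k=\frac1b\sum_{j=(i-1)b+1}^{ib}\nabla f_{\pi^k_j}(\hat y_i^k)$, $y_{i+1}^k=y_i^k-\alpha_kd_i^k+\beta(y_i^k-y_{i-1}^k)$; then set $\tilde x^{k+1}=y_m^k$, $x^{k+1}=y_{m+1}^k$. The proxy iterates are $z^k:=\frac{1}{1-\beta}x^k-\frac{\beta}{1-\beta}\tilde x^k$. Assumption (A.a): there are $L>0$ and $\bar f\in\mathbb R$ such that each $\nabla f_i$ is $L$-Lipschitz and $f_i(x)\ge\bar f$ for all $x\in\mathbb R^d$, $i\in[n]$. Assumption (A.c): the permutations $\pi^1,\pi^2,\dots$ are independent and each is uniformly distributed over all permutations of $[n]$. $\mathbb E_k[\cdot]$ denotes conditional expectation given $\pi^1,\dots,\pi^{k-1}$ (so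 $x^k,\tilde x^k,z^k$ are fixed and only $\pi^k$ is random). *)

theory Defs
  imports "HOL-Analysis.Analysis" "HOL-Combinatorics.Permutations"
begin

text \<open>The state is the pair
  (y_{i-1}, y_i); the result is (y_i, y_{i+1}).  The permutation is a function p on {1..n},
  p j = pi_j; g i is the gradient of f_i.\<close>
definition rrm_step :: "real \<Rightarrow> real \<Rightarrow> real \<Rightarrow> nat \<Rightarrow> (nat \<Rightarrow> 'a \<Rightarrow> 'a::real_normed_vector)
    \<Rightarrow> (nat \<Rightarrow> nat) \<Rightarrow> nat \<Rightarrow> 'a \<times> 'a \<Rightarrow> 'a \<times> 'a" where
  "rrm_step alpha beta lam b g p i s =
     (let yprev = fst s; ycur = snd s;
          yhat = ycur + lam *\<^sub>R (ycur - yprev);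
          d = (1 / real b) *\<^sub>R (\<Sum>j = (i - 1) * b + 1 .. i * b. g (p j) yhat)
      in (ycur, ycur - alpha *\<^sub>R d + beta *\<^sub>R (ycur - yprev)))"

fun rrm_loop :: "real \<Rightarrow> real \<Rightarrow> real \<Rightarrow> nat \<Rightarrow> (nat \<Rightarrow> 'a \<Rightarrow> 'a::real_normed_vector)
    \<Rightarrow> (nat \<Rightarrow> nat) \<Rightarrow> nat \<Rightarrow> 'a \<times> 'a \<Rightarrow> 'a \<times> 'a" where
  "rrm_loop alpha beta lam b g p 0 s = s"
| "rrm_loop alpha beta lam b g p (Suc i) s =
     rrm_step alpha beta lam b g p (Suc i) (rrm_loop alpha beta lam b g p i s)"

text \<open>One epoch: from (tilde x^k, x^k) to (tilde x^{k+1}, x^{k+1}) = (y_m, y_{m+1}).\<close>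
definition rrm_epoch :: "real \<Rightarrow> real \<Rightarrow> real \<Rightarrow> nat \<Rightarrow> nat \<Rightarrow> (nat \<Rightarrow> 'a \<Rightarrow> 'a::real_normed_vector)
    \<Rightarrow> (nat \<Rightarrow> nat) \<Rightarrow> 'a \<times> 'a \<Rightarrow> 'a \<times> 'a" where
  "rrm_epoch alpha beta lam b m g p s = rrm_loop alpha beta lam b g p m s"

text \<open>The RRM iterates: rrm_seq ... k = (tilde x^k, x^k) for k \<ge> 1
  (the value at k = 0 is an irrelevant dummy).  perm k is the permutation of epoch k,
  alpha k the step size of epoch k.\<close>
fun rrm_seq :: "(nat \<Rightarrow> real) \<Rightarrow> real \<Rightarrow> real \<Rightarrow> nat \<Rightarrow> nat \<Rightarrow> (nat \<Rightarrow> 'a \<Rightarrow> 'a::real_normed_vector)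
    \<Rightarrow> (nat \<Rightarrow> nat \<Rightarrow> nat) \<Rightarrow> 'a \<Rightarrow> nat \<Rightarrow> 'a \<times> 'a" where
  "rrm_seq alpha beta lam b m g perm x1 0 = (x1, x1)"
| "rrm_seq alpha beta lam b m g perm x1 (Suc 0) = (x1, x1)"
| "rrm_seq alpha beta lam b m g perm x1 (Suc (Suc k)) =
     rrm_epoch (alpha (Suc k)) beta lam b m g (perm (Suc k)) (rrm_seq alpha beta lam b m g perm x1 (Suc k))"

definition rrm_z :: "real \<Rightarrow> 'a \<times> 'a \<Rightarrow> 'a::real_normed_vector" where
  "rrm_z beta s = (1 / (1 - beta)) *\<^sub>R snd s - (beta / (1 - beta)) *\<^sub>R fst s"

end

theory Submission
  imports Defs
begin



lemma descent:
  fixes F :: "'a::euclidean_space \<Rightarrow> real" and G :: "'a \<Rightarrow> 'a"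
  assumes der: "\<And>x. (F has_derivative (\<lambda>h. G x \<bullet> h)) (at x)"
    and lip: "\<And>x y. norm (G x - G y) \<le> L * norm (x - y)"
  shows "F y \<le> F x + G x \<bullet> (y - x) + L / 2 * (norm (y - x))\<^sup>2"
proof -
  define h where "h = y - x"
  define phi where "phi t = F (x + t *\<^sub>R h) - t * (G x \<bullet> h) - L / 2 * t\<^sup>2 * (norm h)\<^sup>2" for t
  have d: "DERIV phi t :> (G (x + t *\<^sub>R h) \<bullet> h - G x \<bullet> h - L * t * (norm h)\<^sup>2)" for t
  proof -
    have c1: "((\<lambda>t. x + t *\<^sub>R h) has_derivative (\<lambda>s. s *\<^sub>R h)) (at t)"
      by (auto intro!: derivative_eq_intros)
    have c2: "((\<lambda>t. F (x + t *\<^sub>R h)) has_derivative (\<lambda>s. G (x + t *\<^sub>R h) \<bullet> (s *\<^sub>R h))) (at t)"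
      using has_derivative_compose[OF c1 der[of "x + t *\<^sub>R h"]] by (simp add: o_def)
    have c3: "((\<lambda>t. F (x + t *\<^sub>R h)) has_field_derivative (G (x + t *\<^sub>R h) \<bullet> h)) (at t)"
    proof -
      have e: "(\<lambda>s. G (x + t *\<^sub>R h) \<bullet> (s *\<^sub>R h)) = (*) (G (x + t *\<^sub>R h) \<bullet> h)"
        by (rule ext) (simp add: mult.commute)
      show ?thesis using c2 unfolding has_field_derivative_def e .
    qed
    show ?thesis unfolding phi_def
      by (auto intro!: derivative_eq_intros c3 simp: power2_eq_square)
  qed
  have nonpos: "G (x + t *\<^sub>R h) \<bullet> h - G x \<bullet> h - L * t * (norm h)\<^sup>2 \<le> 0" if "0 \<le> t" for t
  proof -
    have "G (x + t *\<^sub>R h) \<bullet> h - G x \<bullet> h = (G (x + t *\<^sub>R h) - G x) \<bullet> h" by (simp add: inner_diff_left)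
    also have "\<dots> \<le> norm (G (x + t *\<^sub>R h) - G x) * norm h" by (rule norm_cauchy_schwarz)
    also have "\<dots> \<le> L * norm (t *\<^sub>R h) * norm h" using lip[of "x + t *\<^sub>R h" x] by (simp add: mult_right_mono)
    also have "\<dots> = L * t * (norm h)\<^sup>2" using that by (simp add: power2_eq_square)
    finally show ?thesis by simp
  qed
  have "phi 1 \<le> phi 0"
  proof (rule DERIV_nonpos_imp_nonincreasing[of 0 1 phi])
    fix t :: real assume "0 \<le> t" "t \<le> 1"
    then show "\<exists>y. DERIV phi t :> y \<and> y \<le> 0" using d[of t] nonpos[of t] by blast
  qed simp
  then show ?thesis unfolding phi_def h_def by simp
qed

lemma grad_bound:
  fixes F :: "'a::euclidean_space \<Rightarrow> real" and G :: "'a \<Rightarrow> 'a"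
  assumes der: "\<And>x. (F has_derivative (\<lambda>h. G x \<bullet> h)) (at x)"
    and lip: "\<And>x y. norm (G x - G y) \<le> L * norm (x - y)"
    and L: "L > 0" and lb: "\<And>x. F x \<ge> fb"
  shows "(norm (G x))\<^sup>2 \<le> 2 * L * (F x - fb)"
proof -
  define y where "y = x - (1/L) *\<^sub>R G x"
  have "F y \<le> F x + G x \<bullet> (y - x) + L / 2 * (norm (y - x))\<^sup>2" by (rule descent[OF der lip])
  also have "G x \<bullet> (y - x) = - (1/L) * (norm (G x))\<^sup>2" unfolding y_def by (simp add: power2_norm_eq_inner)
  also have "L / 2 * (norm (y - x))\<^sup>2 = (1/(2*L)) * (norm (G x))\<^sup>2" unfolding y_def using L
    by (simp add: power2_eq_square field_simps)
  finally have "F y \<le> F x - (1/(2*L)) * (norm (G x))\<^sup>2" by simp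
  then have "(1/(2*L)) * (norm (G x))\<^sup>2 \<le> F x - fb" using lb[of y] by linarith
  then have "(2*L) * ((1/(2*L)) * (norm (G x))\<^sup>2) \<le> (2*L) * (F x - fb)"
    using L by (intro mult_left_mono) auto
  then show ?thesis using L by simp
qed




lemma sum_perm:
  assumes "q permutes S"
  shows "(\<Sum>i\<in>S. g (q i)) = (\<Sum>i\<in>S. (g i :: 'b::comm_monoid_add))"
proof -
  have "(\<Sum>i\<in>S. g (q i)) = (\<Sum>i\<in>q ` S. g i)"
    using sum.reindex[OF permutes_inj_on[OF assms], of g] by (simp add: o_def)
  also have "q ` S = S" using permutes_image[OF assms] .
  finally show ?thesis .
qed

lemma perm_swap_eq:
  assumes "p \<in> S" "p' \<in> S"
  shows "(\<Sum>\<pi>\<in>{\<pi>. \<pi> permutes S}. F (\<pi> p)) = (\<Sum>\<pi>\<in>{\<pi>. \<pi> permutes S}. (F (\<pi> p') :: real))"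
proof -
  have q: "Transposition.transpose p p' permutes S" by (rule permutes_swap_id[OF assms])
  show ?thesis
    using sum_permutations_compose_right[OF q, of "\<lambda>\<pi>. F (\<pi> p)"] by simp
qed

lemma avg1:
  assumes fin: "finite S" and p: "p \<in> S"
  shows "real (card S) * (\<Sum>\<pi>\<in>{\<pi>. \<pi> permutes S}. F (\<pi> p))
       = real (card {\<pi>. \<pi> permutes S}) * (\<Sum>i\<in>S. (F i :: real))"
proof -
  let ?P = "{\<pi>. \<pi> permutes S}"
  have "real (card S) * (\<Sum>\<pi>\<in>?P. F (\<pi> p)) = (\<Sum>p'\<in>S. \<Sum>\<pi>\<in>?P. F (\<pi> p))" by simp
  also have "\<dots> = (\<Sum>p'\<in>S. \<Sum>\<pi>\<in>?P. F (\<pi> p'))"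
    by (rule sum.cong[OF refl]) (rule perm_swap_eq[OF p], assumption)
  also have "\<dots> = (\<Sum>\<pi>\<in>?P. \<Sum>p'\<in>S. F (\<pi> p'))" by (rule sum.swap)
  also have "\<dots> = (\<Sum>\<pi>\<in>?P. \<Sum>i\<in>S. F i)"
    by (rule sum.cong[OF refl]) (rule sum_perm, simp)
  finally show ?thesis by simp
qed

lemma perm_swap_eq2:
  assumes "p \<in> S" "p' \<in> S" "p'' \<in> S" "p' \<noteq> p" "p'' \<noteq> p"
  shows "(\<Sum>\<pi>\<in>{\<pi>. \<pi> permutes S}. G (\<pi> p) (\<pi> p')) = (\<Sum>\<pi>\<in>{\<pi>. \<pi> permutes S}. (G (\<pi> p) (\<pi> p'') :: real))"
proof -
  have q: "Transposition.transpose p' p'' permutes S" by (rule permutes_swap_id) (use assms in auto)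
  have "Transposition.transpose p' p'' p = p" using assms by (simp add: Transposition.transpose_def)
  then show ?thesis
    using sum_permutations_compose_right[OF q, of "\<lambda>\<pi>. G (\<pi> p) (\<pi> p')"] by simp
qed

lemma avg2:
  assumes fin: "finite S" and p: "p \<in> S" "p' \<in> S" "p' \<noteq> p"
  shows "real (card S) * (real (card S) - 1) * (\<Sum>\<pi>\<in>{\<pi>. \<pi> permutes S}. G (\<pi> p) (\<pi> p'))
       = real (card {\<pi>. \<pi> permutes S}) * (\<Sum>i\<in>S. \<Sum>j\<in>S - {i}. (G i j :: real))"
proof -
  let ?P = "{\<pi>. \<pi> permutes S}"
  have c1: "card S \<ge> 1" using fin p by (metis One_nat_def Suc_leI card_gt_0_iff empty_iff)
  have c: "real (card (S - {p})) = real (card S) - 1" using fin p c1 by (simp add: card_Diff_singleton of_nat_diff)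
  have "(real (card S) - 1) * (\<Sum>\<pi>\<in>?P. G (\<pi> p) (\<pi> p')) = (\<Sum>p''\<in>S - {p}. \<Sum>\<pi>\<in>?P. G (\<pi> p) (\<pi> p'))"
    by (simp add: c)
  also have "\<dots> = (\<Sum>p''\<in>S - {p}. \<Sum>\<pi>\<in>?P. G (\<pi> p) (\<pi> p''))"
    by (rule sum.cong[OF refl]) (rule perm_swap_eq2, use p in auto)
  also have "\<dots> = (\<Sum>\<pi>\<in>?P. \<Sum>p''\<in>S - {p}. G (\<pi> p) (\<pi> p''))" by (rule sum.swap)
  also have "\<dots> = (\<Sum>\<pi>\<in>?P. \<Sum>j\<in>S - {\<pi> p}. G (\<pi> p) j)"
  proof (rule sum.cong[OF refl])
    fix \<pi> assume "\<pi> \<in> ?P"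
    then have pi: "\<pi> permutes S" by simp
    have "(\<Sum>p''\<in>S - {p}. G (\<pi> p) (\<pi> p'')) = (\<Sum>j\<in>\<pi> ` (S - {p}). G (\<pi> p) j)"
      using sum.reindex[OF inj_on_subset[OF permutes_inj_on[OF pi] Diff_subset], where g="G (\<pi> p)"]
      by (simp add: o_def)
    also have "\<pi> ` (S - {p}) = S - {\<pi> p}"
      using permutes_image[OF pi] permutes_inj_on[OF pi] p by (auto simp: inj_on_image_set_diff)
    finally show "(\<Sum>p''\<in>S - {p}. G (\<pi> p) (\<pi> p'')) = (\<Sum>j\<in>S - {\<pi> p}. G (\<pi> p) j)" .
  qed
  finally have e: "(real (card S) - 1) * (\<Sum>\<pi>\<in>?P. G (\<pi> p) (\<pi> p')) = (\<Sum>\<pi>\<in>?P. \<Sum>j\<in>S - {\<pi> p}. G (\<pi> p) j)" .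
  show ?thesis
    using avg1[OF fin p(1), of "\<lambda>i. \<Sum>j\<in>S - {i}. G i j"] e by (simp add: mult.assoc)
qed




lemma norm_sum_sq_expand:
  fixes v :: "nat \<Rightarrow> 'a::real_inner"
  shows "(norm (\<Sum>p\<in>S. a p *\<^sub>R v p))\<^sup>2 = (\<Sum>p\<in>S. \<Sum>p'\<in>S. a p * a p' * (v p \<bullet> v p'))"
  unfolding power2_norm_eq_inner inner_sum_left inner_sum_right
  by (subst sum.swap) (simp add: mult.assoc mult.left_commute)

lemma norm_sum_sq_le:
  fixes h :: "nat \<Rightarrow> 'a::real_inner"
  assumes "finite S"
  shows "(norm (\<Sum>i\<in>S. h i))\<^sup>2 \<le> real (card S) * (\<Sum>i\<in>S. (norm (h i))\<^sup>2)"
proof -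
  have "norm (\<Sum>i\<in>S. h i) \<le> (\<Sum>i\<in>S. norm (h i))" by (rule norm_sum)
  then have "(norm (\<Sum>i\<in>S. h i))\<^sup>2 \<le> (\<Sum>i\<in>S. norm (h i))\<^sup>2"
    by (intro power_mono) auto
  also have "\<dots> \<le> (\<Sum>i\<in>S. (norm (h i))\<^sup>2) * card S" by (rule sum_squared_le_sum_of_squares)
  finally show ?thesis by (simp add: mult.commute)
qed

lemma perm_var:
  fixes h :: "nat \<Rightarrow> 'a::real_inner"
  assumes fin: "finite S" and ne: "S \<noteq> {}" and a: "\<And>p. p \<in> S \<Longrightarrow> a p \<ge> 0"
  shows "(\<Sum>\<pi>\<in>{\<pi>. \<pi> permutes S}. (norm (\<Sum>p\<in>S. a p *\<^sub>R h (\<pi> p)))\<^sup>2)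
     \<le> real (card {\<pi>. \<pi> permutes S}) * ((\<Sum>p\<in>S. a p)\<^sup>2 * (norm ((1 / real (card S)) *\<^sub>R (\<Sum>i\<in>S. h i)))\<^sup>2
          + (\<Sum>p\<in>S. (a p)\<^sup>2) * ((1 / real (card S)) * (\<Sum>i\<in>S. (norm (h i))\<^sup>2)))"
proof -
  let ?P = "{\<pi>. \<pi> permutes S}"
  define N where "N = real (card S)"
  define cP where "cP = real (card ?P)"
  define Q where "Q = (1 / N) * (\<Sum>i\<in>S. (norm (h i))\<^sup>2)"
  define H where "H = (\<Sum>i\<in>S. h i)"
  define K where "K = (norm ((1 / N) *\<^sub>R H))\<^sup>2"
  define C where "C p p' = (\<Sum>\<pi>\<in>?P. h (\<pi> p) \<bullet> h (\<pi> p'))" for p p'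
  have Npos: "N \<ge> 1" using fin ne unfolding N_def by (simp add: Suc_leI card_gt_0_iff)
  have cP0: "cP \<ge> 0" unfolding cP_def by simp
  have K0: "K \<ge> 0" unfolding K_def by simp
  have Cb: "C p p' \<le> cP * ((if p = p' then Q else 0) + K)" if pp: "p \<in> S" "p' \<in> S" for p p'
  proof (cases "p = p'")
    case True
    have "N * C p p = cP * (\<Sum>i\<in>S. h i \<bullet> h i)"
      using avg1[OF fin pp(1), of "\<lambda>i. h i \<bullet> h i"] unfolding N_def cP_def C_def by simp
    then have "C p p = cP * Q" using Npos unfolding Q_def
      by (simp add: power2_norm_eq_inner field_simps)
    then show ?thesis using True cP0 K0 by (simp add: mult_left_mono)
  next
    case False
    have e1: "N * (N - 1) * C p p' = cP * (\<Sum>i\<in>S. \<Sum>j\<in>S - {i}. h i \<bullet> h j)"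
      using avg2[OF fin pp(1) pp(2) False[symmetric], of "\<lambda>i j. h i \<bullet> h j"] unfolding N_def cP_def C_def by simp
    have e2: "(\<Sum>i\<in>S. \<Sum>j\<in>S - {i}. h i \<bullet> h j) = (norm H)\<^sup>2 - (\<Sum>i\<in>S. (norm (h i))\<^sup>2)"
    proof -
      have "(\<Sum>i\<in>S. \<Sum>j\<in>S - {i}. h i \<bullet> h j) = (\<Sum>i\<in>S. (\<Sum>j\<in>S. h i \<bullet> h j) - h i \<bullet> h i)"
        using fin by (intro sum.cong refl) (simp add: sum_diff1)
      also have "\<dots> = (\<Sum>i\<in>S. \<Sum>j\<in>S. h i \<bullet> h j) - (\<Sum>i\<in>S. (norm (h i))\<^sup>2)"
        by (simp add: sum_subtractf power2_norm_eq_inner)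
      also have "(\<Sum>i\<in>S. \<Sum>j\<in>S. h i \<bullet> h j) = (norm H)\<^sup>2"
        unfolding H_def power2_norm_eq_inner inner_sum_left inner_sum_right by (rule sum.swap)
      finally show ?thesis .
    qed
    have N2: "N \<ge> 2"
    proof -
      have "{p, p'} \<subseteq> S" using pp by auto
      then have "card {p, p'} \<le> card S" using fin by (rule card_mono[rotated])
      then show ?thesis using False unfolding N_def by simp
    qed
    have Hb: "(norm H)\<^sup>2 \<le> N * (\<Sum>i\<in>S. (norm (h i))\<^sup>2)"
      unfolding H_def N_def by (rule norm_sum_sq_le[OF fin])
    have "N * (N - 1) * C p p' \<le> cP * ((norm H)\<^sup>2 - (norm H)\<^sup>2 / N)"
      unfolding e1 e2 using cP0 Hb Npos
      by (intro mult_left_mono) (auto simp: field_simps)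
    also have "\<dots> = N * (N - 1) * (cP * K)"
      unfolding K_def using Npos by (simp add: field_simps power2_eq_square)
    finally have "C p p' \<le> cP * K" using N2 by (simp add: mult_le_cancel_left_pos)
    then show ?thesis using False by simp
  qed
  have "(\<Sum>\<pi>\<in>?P. (norm (\<Sum>p\<in>S. a p *\<^sub>R h (\<pi> p)))\<^sup>2)
      = (\<Sum>\<pi>\<in>?P. \<Sum>p\<in>S. \<Sum>p'\<in>S. a p * a p' * (h (\<pi> p) \<bullet> h (\<pi> p')))"
    by (simp only: norm_sum_sq_expand)
  also have "\<dots> = (\<Sum>p\<in>S. \<Sum>p'\<in>S. a p * a p' * C p p')"
    unfolding C_def by (simp add: sum_distrib_left sum.swap[of _ ?P])
  also have "\<dots> \<le> (\<Sum>p\<in>S. \<Sum>p'\<in>S. a p * a p' * (cP * ((if p = p' then Q else 0) + K)))"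
    using a Cb by (intro sum_mono mult_left_mono) auto
  also have "\<dots> = (\<Sum>p\<in>S. \<Sum>p'\<in>S. (if p = p' then cP * Q * (a p)\<^sup>2 else 0) + cP * K * (a p * a p'))"
    by (intro sum.cong refl) (auto simp: algebra_simps power2_eq_square)
  also have "\<dots> = (\<Sum>p\<in>S. cP * Q * (a p)\<^sup>2) + cP * K * (\<Sum>p\<in>S. \<Sum>p'\<in>S. a p * a p')"
    using fin by (simp add: sum.distrib sum.delta' sum_distrib_left)
  also have "(\<Sum>p\<in>S. \<Sum>p'\<in>S. a p * a p') = (\<Sum>p\<in>S. a p)\<^sup>2"
    by (simp add: power2_eq_square sum_product)
  also have "(\<Sum>p\<in>S. cP * Q * (a p)\<^sup>2) + cP * K * (\<Sum>p\<in>S. a p)\<^sup>2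
      = cP * ((\<Sum>p\<in>S. a p)\<^sup>2 * K + (\<Sum>p\<in>S. (a p)\<^sup>2) * Q)"
    by (simp add: sum_distrib_left algebra_simps)
  finally show ?thesis unfolding cP_def K_def Q_def N_def H_def .
qed




lemma div_block:
  assumes "b \<ge> 1" "j \<in> {b*m+1..b*m+b}"
  shows "(j - 1) div b = (m::nat)"
  by (rule div_nat_eqI) (use assms in auto)


lemma blocks_to_pos:
  fixes v :: "nat \<Rightarrow> 'a::real_vector"
  assumes b: "b \<ge> 1"
  shows "(\<Sum>l<m. W l *\<^sub>R ((1 / real b) *\<^sub>R (\<Sum>j = l*b+1..Suc l*b. v j)))
       = (\<Sum>j=1..b*m. (W ((j - 1) div b) / real b) *\<^sub>R v j)"
proof (induction m)
  case 0
  then show ?case by simp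
next
  case (Suc m)
  have split: "(\<Sum>j=1..b*Suc m. (W ((j - 1) div b) / real b) *\<^sub>R v j)
     = (\<Sum>j=1..b*m. (W ((j - 1) div b) / real b) *\<^sub>R v j) + (\<Sum>j=b*m+1..b*m+b. (W ((j - 1) div b) / real b) *\<^sub>R v j)"
    using sum.ub_add_nat[of 1 "b*m" "\<lambda>j. (W ((j - 1) div b) / real b) *\<^sub>R v j" b] by (simp add: algebra_simps)
  have blk: "(\<Sum>j=b*m+1..b*m+b. (W ((j - 1) div b) / real b) *\<^sub>R v j) = (\<Sum>j=b*m+1..b*m+b. (W m / real b) *\<^sub>R v j)"
  proof (rule sum.cong[OF refl])
    fix j assume "j \<in> {b*m+1..b*m+b}"
    then have "(j - 1) div b = m" by (rule div_block[OF b])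
    then show "(W ((j - 1) div b) / real b) *\<^sub>R v j = (W m / real b) *\<^sub>R v j" by simp
  qed
  have "(\<Sum>l<Suc m. W l *\<^sub>R ((1 / real b) *\<^sub>R (\<Sum>j = l*b+1..Suc l*b. v j)))
      = (\<Sum>l<m. W l *\<^sub>R ((1 / real b) *\<^sub>R (\<Sum>j = l*b+1..Suc l*b. v j))) + W m *\<^sub>R ((1 / real b) *\<^sub>R (\<Sum>j = m*b+1..Suc m*b. v j))"
    by simp
  also have "W m *\<^sub>R ((1 / real b) *\<^sub>R (\<Sum>j = m*b+1..Suc m*b. v j)) = (\<Sum>j=b*m+1..b*m+b. (W m / real b) *\<^sub>R v j)"
    by (simp add: scaleR_sum_right algebra_simps)
  finally show ?case using Suc split blk by simp
qed




lemma pos_div_lt: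
  assumes "b \<ge> 1" "j \<in> {1..b*m}"
  shows "(j - 1) div b < (m::nat)"
proof -
  have "j - 1 < m * b" using assms by (auto simp: mult.commute)
  then show ?thesis by (rule less_mult_imp_div_less)
qed

lemma Vbound_a:
  fixes h :: "nat \<Rightarrow> 'a::real_inner"
  assumes b: "b \<ge> 1" and m: "m \<ge> 1" and pi: "\<pi> permutes {1..b*m}"
    and W: "\<And>l. l < m \<Longrightarrow> 0 \<le> W l \<and> W l \<le> 1"
  shows "(norm (\<Sum>l<m. W l *\<^sub>R ((1 / real b) *\<^sub>R (\<Sum>j = l*b+1..Suc l*b. h (\<pi> j)))))\<^sup>2
       \<le> (real m)\<^sup>2 * ((1 / real (b*m)) * (\<Sum>i=1..b*m. (norm (h i))\<^sup>2))"
proof -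
  let ?S = "{1..b*m}"
  define a where "a j = W ((j - 1) div b) / real b" for j
  have a: "0 \<le> a j \<and> a j \<le> 1 / real b" if "j \<in> ?S" for j
    using W[OF pos_div_lt[OF b that]] b unfolding a_def by (auto simp: divide_right_mono)
  have "norm (\<Sum>l<m. W l *\<^sub>R ((1 / real b) *\<^sub>R (\<Sum>j = l*b+1..Suc l*b. h (\<pi> j))))
      = norm (\<Sum>j\<in>?S. a j *\<^sub>R h (\<pi> j))"
    unfolding blocks_to_pos[OF b] a_def ..
  also have "\<dots> \<le> (\<Sum>j\<in>?S. norm (a j *\<^sub>R h (\<pi> j)))" by (rule norm_sum)
  also have "\<dots> \<le> (\<Sum>j\<in>?S. (1 / real b) * norm (h (\<pi> j)))"
  proof (rule sum_mono)
    fix j assume "j \<in> ?S"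
    then have "a j \<le> 1 / real b" "0 \<le> a j" using a by auto
    then have "a j * norm (h (\<pi> j)) \<le> (1 / real b) * norm (h (\<pi> j))"
      by (intro mult_right_mono) auto
    then show "norm (a j *\<^sub>R h (\<pi> j)) \<le> (1 / real b) * norm (h (\<pi> j))"
      using \<open>0 \<le> a j\<close> by simp
  qed
  also have "\<dots> = (1 / real b) * (\<Sum>i\<in>?S. norm (h i))"
    by (simp only: sum_distrib_left[symmetric] sum_perm[OF pi, of "\<lambda>i. norm (h i)"])
  finally have n1: "norm (\<Sum>l<m. W l *\<^sub>R ((1 / real b) *\<^sub>R (\<Sum>j = l*b+1..Suc l*b. h (\<pi> j))))
      \<le> (1 / real b) * (\<Sum>i\<in>?S. norm (h i))" .
  have "(norm (\<Sum>l<m. W l *\<^sub>R ((1 / real b) *\<^sub>R (\<Sum>j = l*b+1..Suc l*b. h (\<pi> j)))))\<^sup>2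
      \<le> ((1 / real b) * (\<Sum>i\<in>?S. norm (h i)))\<^sup>2"
    using n1 by (intro power_mono) auto
  also have "\<dots> = (1 / real b)\<^sup>2 * (\<Sum>i\<in>?S. norm (h i))\<^sup>2" by (rule power_mult_distrib)
  also have "\<dots> \<le> (1 / real b)\<^sup>2 * ((\<Sum>i\<in>?S. (norm (h i))\<^sup>2) * real (b*m))"
    using sum_squared_le_sum_of_squares[of "\<lambda>i. norm (h i)" ?S] by (intro mult_left_mono) auto
  also have "\<dots> = (real m)\<^sup>2 * ((1 / real (b*m)) * (\<Sum>i\<in>?S. (norm (h i))\<^sup>2))"
    using b m by (simp add: field_simps power2_eq_square)
  finally show ?thesis .
qed

lemma Vbound_b:
  fixes h :: "nat \<Rightarrow> 'a::real_inner"
  assumes b: "b \<ge> 1" and m: "m \<ge> 1"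
    and W: "\<And>l. l < m \<Longrightarrow> 0 \<le> W l \<and> W l \<le> 1"
  shows "(\<Sum>\<pi>\<in>{\<pi>. \<pi> permutes {1..b*m}}. (norm (\<Sum>l<m. W l *\<^sub>R ((1 / real b) *\<^sub>R (\<Sum>j = l*b+1..Suc l*b. h (\<pi> j)))))\<^sup>2)
       \<le> real (card {\<pi>. \<pi> permutes {1..b*m}}) * ((real m)\<^sup>2 * (norm ((1 / real (b*m)) *\<^sub>R (\<Sum>i=1..b*m. h i)))\<^sup>2
          + (real m / real b) * ((1 / real (b*m)) * (\<Sum>i=1..b*m. (norm (h i))\<^sup>2)))"
proof -
  let ?S = "{1..b*m}"
  let ?P = "{\<pi>. \<pi> permutes ?S}"
  define a where "a j = W ((j - 1) div b) / real b" for j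
  have a: "0 \<le> a j \<and> a j \<le> 1 / real b" if "j \<in> ?S" for j
    using W[OF pos_div_lt[OF b that]] b unfolding a_def by (auto simp: divide_right_mono)
  have ne: "?S \<noteq> {}" using b m by (simp add: Suc_le_eq)
  have cS: "card ?S = b*m" by simp
  have "(\<Sum>\<pi>\<in>?P. (norm (\<Sum>l<m. W l *\<^sub>R ((1 / real b) *\<^sub>R (\<Sum>j = l*b+1..Suc l*b. h (\<pi> j)))))\<^sup>2)
     = (\<Sum>\<pi>\<in>?P. (norm (\<Sum>j\<in>?S. a j *\<^sub>R h (\<pi> j)))\<^sup>2)"
    unfolding blocks_to_pos[OF b] a_def ..
  also have "\<dots> \<le> real (card ?P) * ((\<Sum>p\<in>?S. a p)\<^sup>2 * (norm ((1 / real (card ?S)) *\<^sub>R (\<Sum>i\<in>?S. h i)))\<^sup>2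
          + (\<Sum>p\<in>?S. (a p)\<^sup>2) * ((1 / real (card ?S)) * (\<Sum>i\<in>?S. (norm (h i))\<^sup>2)))"
    by (rule perm_var) (use a ne in auto)
  also have "\<dots> \<le> real (card ?P) * ((real m)\<^sup>2 * (norm ((1 / real (b*m)) *\<^sub>R (\<Sum>i\<in>?S. h i)))\<^sup>2
          + (real m / real b) * ((1 / real (b*m)) * (\<Sum>i\<in>?S. (norm (h i))\<^sup>2)))"
  proof -
    have s1: "(\<Sum>p\<in>?S. a p) \<le> real m"
    proof -
      have "(\<Sum>p\<in>?S. a p) \<le> (\<Sum>p\<in>?S. 1 / real b)" using a by (intro sum_mono) auto
      also have "\<dots> = real m" using b by simp
      finally show ?thesis .
    qed
    have s0: "0 \<le> (\<Sum>p\<in>?S. a p)" using a by (intro sum_nonneg) auto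
    have s2: "(\<Sum>p\<in>?S. (a p)\<^sup>2) \<le> real m / real b"
    proof -
      have "(\<Sum>p\<in>?S. (a p)\<^sup>2) \<le> (\<Sum>p\<in>?S. (1 / real b)\<^sup>2)" using a by (intro sum_mono power_mono) auto
      also have "\<dots> = real m / real b" using b by (simp add: power2_eq_square)
      finally show ?thesis .
    qed
    have q: "(\<Sum>p\<in>?S. a p)\<^sup>2 \<le> (real m)\<^sup>2" using s0 s1 by (intro power_mono) auto
    have Q0: "0 \<le> (1 / real (b*m)) * (\<Sum>i\<in>?S. (norm (h i))\<^sup>2)" by (simp add: sum_nonneg)
    show ?thesis unfolding cS
      by (intro mult_left_mono add_mono mult_right_mono q s2 Q0) auto
  qed
  finally show ?thesis .
qed




lemma loop_Suc:
  "rrm_loop al be lam b g p (Suc i) s =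
    (snd (rrm_loop al be lam b g p i s),
     snd (rrm_loop al be lam b g p i s)
       - al *\<^sub>R ((1 / real b) *\<^sub>R (\<Sum>j = i*b+1..Suc i*b. g (p j)
            (snd (rrm_loop al be lam b g p i s) + lam *\<^sub>R (snd (rrm_loop al be lam b g p i s) - fst (rrm_loop al be lam b g p i s)))))
       + be *\<^sub>R (snd (rrm_loop al be lam b g p i s) - fst (rrm_loop al be lam b g p i s)))"
  by (simp add: rrm_step_def Let_def)

locale rrm_ep =
  fixes al be lam L :: real and b m n :: nat and g :: "nat \<Rightarrow> 'a \<Rightarrow> 'a::euclidean_space"
    and p :: "nat \<Rightarrow> nat" and s :: "'a \<times> 'a"
  assumes b1: "b \<ge> 1" and m1: "m \<ge> 1" and nbm: "n = b * m"
    and perm: "p permutes {1..n}"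
    and lip: "\<And>i x y. i \<in> {1..n} \<Longrightarrow> norm (g i x - g i y) \<le> L * norm (x - y)"
    and L: "L > 0" and be0: "0 \<le> be" and be: "be < 1"
    and lam0: "0 \<le> lam" and lam1: "lam \<le> be / (1 - be)"
    and al0: "0 < al" and al1: "al \<le> (1 - be) * (1 - be ^ m) / (4 * L * real m)"
begin

definition "Y i = snd (rrm_loop al be lam b g p i s)"
definition "Yp i = fst (rrm_loop al be lam b g p i s)"
definition "v i = Y i - Yp i"
definition "yh i = Y i + lam *\<^sub>R v i"
definition "dd i = (1 / real b) *\<^sub>R (\<Sum>j = i*b+1..Suc i*b. g (p j) (yh i))"
definition "c = be / (1 - be)"
definition "ka = al / (1 - be)"

lemma dyn:
  shows "v i = be ^ i *\<^sub>R v 0 - al *\<^sub>R (\<Sum>l<i. be ^ (i - 1 - l) *\<^sub>R dd l)"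
    and "Y i + c *\<^sub>R v i = Y 0 + c *\<^sub>R v 0 - ka *\<^sub>R (\<Sum>l<i. dd l)"
    and "yh i - (Y 0 + c *\<^sub>R v 0) = ((lam - c) * be ^ i) *\<^sub>R v 0
            - ka *\<^sub>R (\<Sum>l<i. (1 + (lam - c) * (1 - be) * be ^ (i - 1 - l)) *\<^sub>R dd l)"
proof -
  have S1: "Yp (Suc i) = Y i" for i unfolding Yp_def Y_def by (simp only: loop_Suc fst_conv)
  have S2: "Y (Suc i) = Y i - al *\<^sub>R dd i + be *\<^sub>R v i" for i
    unfolding Y_def dd_def yh_def v_def Yp_def by (simp only: loop_Suc snd_conv)
  have vS: "v (Suc i) = be *\<^sub>R v i - al *\<^sub>R dd i" for i
    using S1[of i] S2[of i] unfolding v_def[of "Suc i"] by (simp add: algebra_simps)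
  have YS: "Y (Suc i) = Y i + v (Suc i)" for i
    using S1[of i] unfolding v_def[of "Suc i"] by simp
  show V: "v i = be ^ i *\<^sub>R v 0 - al *\<^sub>R (\<Sum>l<i. be ^ (i - 1 - l) *\<^sub>R dd l)" for i
  proof (induction i)
    case 0 then show ?case by simp
  next
    case (Suc i)
    have "(\<Sum>l<Suc i. be ^ (Suc i - 1 - l) *\<^sub>R dd l) = be *\<^sub>R (\<Sum>l<i. be ^ (i - 1 - l) *\<^sub>R dd l) + dd i"
    proof -
      have "(\<Sum>l<i. be ^ (Suc i - 1 - l) *\<^sub>R dd l) = (\<Sum>l<i. be *\<^sub>R (be ^ (i - 1 - l) *\<^sub>R dd l))"
      proof (rule sum.cong[OF refl])
        fix l assume "l \<in> {..<i}"
        then have "Suc i - 1 - l = Suc (i - 1 - l)" by auto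
        then show "be ^ (Suc i - 1 - l) *\<^sub>R dd l = be *\<^sub>R (be ^ (i - 1 - l) *\<^sub>R dd l)" by simp
      qed
      then show ?thesis by (simp add: scaleR_sum_right)
    qed
    then have sq: "(\<Sum>l<Suc i. be ^ (Suc i - 1 - l) *\<^sub>R dd l) = be *\<^sub>R (\<Sum>l<i. be ^ (i - 1 - l) *\<^sub>R dd l) + dd i" .
    have "v (Suc i) = be *\<^sub>R v i - al *\<^sub>R dd i" by (rule vS)
    also have "\<dots> = be *\<^sub>R (be ^ i *\<^sub>R v 0 - al *\<^sub>R (\<Sum>l<i. be ^ (i - 1 - l) *\<^sub>R dd l)) - al *\<^sub>R dd i"
      using Suc by simp
    also have "\<dots> = be ^ Suc i *\<^sub>R v 0 - al *\<^sub>R (be *\<^sub>R (\<Sum>l<i. be ^ (i - 1 - l) *\<^sub>R dd l) + dd i)"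
      by (simp add: algebra_simps)
    finally show ?case unfolding sq .
  qed
  have cid: "(1 + c) * be = c" "(1 + c) * al = ka" using be unfolding c_def ka_def by (auto simp: field_simps)
  show Z: "Y i + c *\<^sub>R v i = Y 0 + c *\<^sub>R v 0 - ka *\<^sub>R (\<Sum>l<i. dd l)" for i
  proof (induction i)
    case 0 then show ?case by simp
  next
    case (Suc i)
    have "Y (Suc i) + c *\<^sub>R v (Suc i) = Y i + (1 + c) *\<^sub>R v (Suc i)" by (simp add: YS algebra_simps)
    also have "\<dots> = Y i + c *\<^sub>R v i - ka *\<^sub>R dd i"
    proof -
      have "(1 + c) *\<^sub>R v (Suc i) = ((1 + c) * be) *\<^sub>R v i - ((1 + c) * al) *\<^sub>R dd i"
        unfolding vS by (simp add: scaleR_diff_right)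
      then show ?thesis unfolding cid by simp
    qed
    finally show ?case using Suc by (simp add: algebra_simps)
  qed
  have "yh i - (Y 0 + c *\<^sub>R v 0) = (Y i + c *\<^sub>R v i) + (lam - c) *\<^sub>R v i - (Y 0 + c *\<^sub>R v 0)"
    unfolding yh_def by (simp add: algebra_simps)
  also have "\<dots> = (lam - c) *\<^sub>R v i - ka *\<^sub>R (\<Sum>l<i. dd l)" unfolding Z[of i] by (simp add: algebra_simps)
  also have "\<dots> = ((lam - c) * be ^ i) *\<^sub>R v 0
            - ka *\<^sub>R (\<Sum>l<i. (1 + (lam - c) * (1 - be) * be ^ (i - 1 - l)) *\<^sub>R dd l)"
  proof -
    have ka1: "ka * (1 - be) = al" using be unfolding ka_def by simp
    have "ka *\<^sub>R (\<Sum>l<i. (1 + (lam - c) * (1 - be) * be ^ (i - 1 - l)) *\<^sub>R dd l)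
        = ka *\<^sub>R (\<Sum>l<i. dd l) + (lam - c) *\<^sub>R (al *\<^sub>R (\<Sum>l<i. be ^ (i - 1 - l) *\<^sub>R dd l))"
    proof -
      have e1: "(\<Sum>l<i. (1 + (lam - c) * (1 - be) * be ^ (i - 1 - l)) *\<^sub>R dd l)
          = (\<Sum>l<i. dd l) + (\<Sum>l<i. ((lam - c) * (1 - be) * be ^ (i - 1 - l)) *\<^sub>R dd l)"
        by (simp only: scaleR_add_left sum.distrib scaleR_one)
      have e2: "ka *\<^sub>R (\<Sum>l<i. ((lam - c) * (1 - be) * be ^ (i - 1 - l)) *\<^sub>R dd l)
          = (lam - c) *\<^sub>R (al *\<^sub>R (\<Sum>l<i. be ^ (i - 1 - l) *\<^sub>R dd l))"
      proof -
        have kk: "ka * ((lam - c) * (1 - be) * x) = (lam - c) * (al * x)" for x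
          using be unfolding ka_def by (simp add: field_simps)
        show ?thesis unfolding scaleR_sum_right scaleR_scaleR kk ..
      qed
      show ?thesis unfolding e1 scaleR_add_right e2 ..
    qed
    then show ?thesis unfolding V[of i] by (simp add: scaleR_diff_right)
  qed
  finally show "yh i - (Y 0 + c *\<^sub>R v 0) = ((lam - c) * be ^ i) *\<^sub>R v 0
            - ka *\<^sub>R (\<Sum>l<i. (1 + (lam - c) * (1 - be) * be ^ (i - 1 - l)) *\<^sub>R dd l)" .
qed

end




lemma final_real:
  fixes E nm ns T SX SX2 L al be q rm ka c :: real
  assumes E: "E \<ge> 0" and nm: "nm \<ge> 0" and T0: "T \<ge> 0" and SX: "SX \<ge> 0" and L: "L > 0"
    and al: "al > 0" and be0: "0 \<le> be" and be1: "be < 1" and q0: "0 \<le> q" and q1: "q < 1" and rm: "rm \<ge> 1"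
    and ka: "ka = al / (1 - be)" and c: "c = be / (1 - be)"
    and alb: "al \<le> (1 - be) * (1 - q) / (4 * L * rm)"
    and hT: "T \<le> rm * E + ka * SX + rm * ka * L * T"
    and hS: "ns \<le> nm + L * T" and ns0: "ns \<ge> 0"
    and hX: "SX\<^sup>2 \<le> rm * SX2"
  shows "q * E\<^sup>2 + (c * al * ns)\<^sup>2 / (1 - q)
     \<le> ((1 + 2 * q) / 3) * E\<^sup>2 + (be\<^sup>2 * al\<^sup>2 / ((1 - be)\<^sup>2 * (1 - q))) * (2 * nm\<^sup>2 + (2 / (3 * rm)) * SX2)"
proof -
  have omb: "1 - be > 0" using be1 by simp
  have omq: "1 - q > 0" using q1 by simp
  have kaL: "ka * L \<le> (1 - q) / (4 * rm)"
  proof -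
    have "ka * L = al * L / (1 - be)" unfolding ka by simp
    also have "\<dots> \<le> ((1 - be) * (1 - q) / (4 * L * rm)) * L / (1 - be)"
      using alb L omb by (intro divide_right_mono mult_right_mono) auto
    also have "\<dots> = (1 - q) / (4 * rm)" using L omb rm by (simp add: field_simps)
    finally show ?thesis .
  qed
  have ka0: "ka \<ge> 0" unfolding ka using al omb by simp
  have rkl: "rm * ka * L \<le> 1 / 4"
  proof -
    have "rm * (ka * L) \<le> rm * ((1 - q) / (4 * rm))" using kaL rm by (intro mult_left_mono) auto
    also have "\<dots> = (1 - q) / 4" using rm by simp
    also have "\<dots> \<le> 1 / 4" using q0 by simp
    finally show ?thesis by (simp add: mult.assoc)
  qed
  have Tb: "T \<le> (4 / 3) * (rm * E + ka * SX)"
  proof -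
    have "rm * ka * L * T \<le> (1 / 4) * T" using rkl T0 by (intro mult_right_mono) auto
    then have "T \<le> rm * E + ka * SX + (1 / 4) * T" using hT by linarith
    then show ?thesis by (simp add: algebra_simps)
  qed
  define P where "P = nm + (1 - q) / (3 * rm) * SX"
  define R where "R = (4 / 3) * L * rm * E"
  have P0: "P \<ge> 0" unfolding P_def using nm SX omq rm by simp
  have R0: "R \<ge> 0" unfolding R_def using L rm E by simp
  have nsPR: "ns \<le> P + R"
  proof -
    have "L * T \<le> L * ((4 / 3) * (rm * E + ka * SX))" using Tb L by (intro mult_left_mono) auto
    also have "\<dots> = R + (4 / 3) * (ka * L) * SX" unfolding R_def by (simp add: algebra_simps)
    also have "(4 / 3) * (ka * L) * SX \<le> (4 / 3) * ((1 - q) / (4 * rm)) * SX"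
      using kaL SX by (intro mult_right_mono mult_left_mono) auto
    also have "(4 / 3) * ((1 - q) / (4 * rm)) * SX = (1 - q) / (3 * rm) * SX" using rm by (simp add: field_simps)
    finally show ?thesis using hS unfolding P_def by linarith
  qed
  have ns2: "ns\<^sup>2 \<le> (3 / 2) * P\<^sup>2 + 3 * R\<^sup>2"
  proof -
    have "ns\<^sup>2 \<le> (P + R)\<^sup>2" using nsPR ns0 by (intro power_mono) auto
    also have "\<dots> \<le> (3 / 2) * P\<^sup>2 + 3 * R\<^sup>2"
    proof -
      have "(3/2)*P^2 + 3*R^2 - (P+R)^2 = (1/2)*(P - 2*R)^2"
        by (simp add: power2_eq_square algebra_simps)
      moreover have "(1/2)*(P - 2*R)^2 \<ge> 0" by simp
      ultimately show ?thesis by linarith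
    qed
    finally show ?thesis .
  qed
  have P2: "P\<^sup>2 \<le> (4 / 3) * nm\<^sup>2 + (4 / (9 * rm)) * SX2"
  proof -
    define B where "B = (1 - q) / (3 * rm) * SX"
    have "P\<^sup>2 \<le> (4 / 3) * nm\<^sup>2 + 4 * B\<^sup>2"
    proof -
      have "(4/3)*nm^2 + 4*B^2 - (nm+B)^2 = (1/3)*(nm - 3*B)^2"
        by (simp add: power2_eq_square algebra_simps)
      moreover have "(1/3)*(nm - 3*B)^2 \<ge> 0" by simp
      ultimately have "(nm + B)^2 \<le> (4 / 3) * nm\<^sup>2 + 4 * B\<^sup>2" by linarith
      moreover have "P = nm + B" unfolding P_def B_def ..
      ultimately show ?thesis by simp
    qed
    also have "4 * B\<^sup>2 \<le> (4 / (9 * rm)) * SX2"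
    proof -
      have "B\<^sup>2 = ((1 - q) / (3 * rm))\<^sup>2 * SX\<^sup>2" unfolding B_def by (rule power_mult_distrib)
      also have "\<dots> \<le> (1 / (3 * rm))\<^sup>2 * SX\<^sup>2"
        using q0 q1 rm by (intro mult_right_mono power_mono divide_right_mono) auto
      also have "\<dots> \<le> (1 / (3 * rm))\<^sup>2 * (rm * SX2)" using hX by (intro mult_left_mono) auto
      also have "\<dots> = (1 / (9 * rm)) * SX2" using rm by (simp add: power2_eq_square field_simps)
      finally show ?thesis by simp
    qed
    finally show ?thesis by simp
  qed
  have calr: "c * al * L * rm \<le> (1 - q) / 4"
  proof -
    have "c * al * L * rm = be * (ka * L * rm)" unfolding c ka by simp
    also have "\<dots> \<le> 1 * ((1 - q) / (4 * rm) * rm)"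
      using be0 be1 kaL rm ka0 L by (intro mult_mono mult_right_mono) auto
    also have "\<dots> = (1 - q) / 4" using rm by simp
    finally show ?thesis .
  qed
  have calr0: "c * al * L * rm \<ge> 0" unfolding c using be0 omb al L rm by simp
  have Rt: "(c * al)\<^sup>2 * (3 * R\<^sup>2) \<le> (1 - q)\<^sup>2 / 3 * E\<^sup>2"
  proof -
    have "(c * al)\<^sup>2 * (3 * R\<^sup>2) = (16 / 3) * (c * al * L * rm)\<^sup>2 * E\<^sup>2"
      unfolding R_def by (simp add: power2_eq_square)
    also have "\<dots> \<le> (16 / 3) * ((1 - q) / 4)\<^sup>2 * E\<^sup>2"
      using calr calr0 by (intro mult_right_mono mult_left_mono power_mono) auto
    also have "\<dots> = (1 - q)\<^sup>2 / 3 * E\<^sup>2" by (simp add: power2_eq_square)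
    finally show ?thesis .
  qed
  have Pt: "(c * al)\<^sup>2 * ((3 / 2) * P\<^sup>2) \<le> (c * al)\<^sup>2 * (2 * nm\<^sup>2 + (2 / (3 * rm)) * SX2)"
  proof -
    have "(3 / 2) * P\<^sup>2 \<le> (3 / 2) * ((4 / 3) * nm\<^sup>2 + (4 / (9 * rm)) * SX2)" using P2 by simp
    also have "\<dots> = 2 * nm\<^sup>2 + (2 / (3 * rm)) * SX2" using rm by (simp add: field_simps)
    finally show ?thesis by (intro mult_left_mono) auto
  qed
  have main: "(c * al * ns)\<^sup>2 \<le> (c * al)\<^sup>2 * (2 * nm\<^sup>2 + (2 / (3 * rm)) * SX2) + (1 - q)\<^sup>2 / 3 * E\<^sup>2"
  proof -
    have "(c * al * ns)\<^sup>2 = (c * al)\<^sup>2 * ns\<^sup>2" by (simp add: power_mult_distrib)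
    also have "\<dots> \<le> (c * al)\<^sup>2 * ((3 / 2) * P\<^sup>2 + 3 * R\<^sup>2)" using ns2 by (intro mult_left_mono) auto
    also have "\<dots> = (c * al)\<^sup>2 * ((3 / 2) * P\<^sup>2) + (c * al)\<^sup>2 * (3 * R\<^sup>2)" by (simp add: algebra_simps)
    finally show ?thesis using Pt Rt by linarith
  qed
  have "(c * al * ns)\<^sup>2 / (1 - q) \<le> ((c * al)\<^sup>2 * (2 * nm\<^sup>2 + (2 / (3 * rm)) * SX2) + (1 - q)\<^sup>2 / 3 * E\<^sup>2) / (1 - q)"
    using main omq by (intro divide_right_mono) auto
  also have "\<dots> = (be\<^sup>2 * al\<^sup>2 / ((1 - be)\<^sup>2 * (1 - q))) * (2 * nm\<^sup>2 + (2 / (3 * rm)) * SX2) + (1 - q) / 3 * E\<^sup>2"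
  proof -
    define Z where "Z = 2 * nm\<^sup>2 + (2 / (3 * rm)) * SX2"
    have e1: "(c * al)\<^sup>2 * Z / (1 - q) = (be\<^sup>2 * al\<^sup>2 / ((1 - be)\<^sup>2 * (1 - q))) * Z"
      unfolding c using omq omb by (simp add: field_simps power2_eq_square)
    have e2: "(1 - q)\<^sup>2 / 3 * E\<^sup>2 / (1 - q) = (1 - q) / 3 * E\<^sup>2"
      using omq by (simp add: power2_eq_square field_simps)
    show ?thesis unfolding Z_def[symmetric] add_divide_distrib e1 e2 ..
  qed
  finally show ?thesis by (simp add: field_simps)
qed




lemma convex_sq:
  fixes e w :: "'a::real_normed_vector"
  assumes q0: "0 \<le> q" and q1: "q < 1"
  shows "(norm (q *\<^sub>R e - w))\<^sup>2 \<le> q * (norm e)\<^sup>2 + (norm w)\<^sup>2 / (1 - q)"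
proof -
  define E where "E = norm e"
  define W where "W = norm w"
  have "norm (q *\<^sub>R e - w) \<le> q * E + W"
    unfolding E_def W_def using norm_triangle_ineq4[of "q *\<^sub>R e" w] q0 by simp
  then have "(norm (q *\<^sub>R e - w))\<^sup>2 \<le> (q * E + W)\<^sup>2" by (intro power_mono) auto
  also have "\<dots> \<le> q * E\<^sup>2 + W\<^sup>2 / (1 - q)"
  proof -
    have id: "q * E\<^sup>2 + W\<^sup>2 / (1 - q) - (q * E + W)\<^sup>2 = q * ((1 - q) * E - W)\<^sup>2 / (1 - q)"
      using q1 by (simp add: field_simps power2_eq_square)
    have "q * ((1 - q) * E - W)\<^sup>2 / (1 - q) \<ge> 0" using q0 q1 by simp
    then show ?thesis using id by linarith
  qed
  finally show ?thesis unfolding E_def W_def .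
qed

context rrm_ep
begin

definition "z = Y 0 + c *\<^sub>R v 0"
definition "D l = (1 / real b) *\<^sub>R (\<Sum>j = l*b+1..Suc l*b. g (p j) z)"
definition "om i l = 1 + (lam - c) * (1 - be) * be ^ (i - 1 - l)"
definition "M = (\<Sum>l<m. be ^ (m - 1 - l) *\<^sub>R D l)"
definition "Xw i l = (if l < i then om i l else 0)"
definition "X i = norm (\<Sum>l<m. Xw i l *\<^sub>R D l)"
definition "a i = norm (yh i - z)"
definition "S = (\<Sum>l<m. be ^ (m - 1 - l) *\<^sub>R dd l)"

lemma c0: "c \<ge> 0" unfolding c_def using be0 be by simp
lemma lamc: "lam \<le> c" unfolding c_def using lam1 .
lemma ka0: "ka \<ge> 0" unfolding ka_def using al0 be by simp

lemma om_bnd: "0 \<le> om i l \<and> om i l \<le> 1"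
proof -
  have t1: "(lam - c) * (1 - be) \<le> 0" using lamc be by (simp add: mult_nonpos_nonneg)
  have t2: "(lam - c) * (1 - be) \<ge> - be"
  proof -
    have "(lam - c) * (1 - be) \<ge> (- c) * (1 - be)" using lam0 be by (intro mult_right_mono) auto
    also have "(- c) * (1 - be) = - be" unfolding c_def using be by simp
    finally show ?thesis .
  qed
  have p1: "be ^ (i - 1 - l) \<le> 1" "0 \<le> be ^ (i - 1 - l)" using be0 be by (auto intro: power_le_one)
  have "(lam - c) * (1 - be) * be ^ (i - 1 - l) \<ge> - be * be ^ (i - 1 - l)"
    using t2 p1 by (intro mult_right_mono) auto
  moreover have "be * be ^ (i - 1 - l) \<le> 1" using p1 be0 be by (simp add: mult_le_one)
  moreover have "(lam - c) * (1 - be) * be ^ (i - 1 - l) \<le> 0" using t1 p1 by (simp add: mult_nonpos_nonneg)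
  ultimately show ?thesis unfolding om_def by linarith
qed

lemma Xw_bnd: "0 \<le> Xw i l \<and> Xw i l \<le> 1" unfolding Xw_def using om_bnd by auto

lemma dd_D:
  assumes l: "l < m"
  shows "norm (dd l - D l) \<le> L * a l"
proof -
  have inS: "p j \<in> {1..n}" if "j \<in> {l*b+1..Suc l*b}" for j
  proof -
    have "Suc l * b \<le> m * b" using l by (intro mult_right_mono) auto
    then have "j \<in> {1..n}" using that nbm by (auto simp: mult.commute)
    then show ?thesis using permutes_in_image[OF perm] by simp
  qed
  have "dd l - D l = (1 / real b) *\<^sub>R (\<Sum>j = l*b+1..Suc l*b. g (p j) (yh l) - g (p j) z)"
    unfolding dd_def D_def by (simp add: sum_subtractf scaleR_diff_right)
  then have "norm (dd l - D l) = (1 / real b) * norm (\<Sum>j = l*b+1..Suc l*b. g (p j) (yh l) - g (p j) z)"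
    by simp
  also have "\<dots> \<le> (1 / real b) * (\<Sum>j = l*b+1..Suc l*b. L * a l)"
  proof (intro mult_left_mono)
    have "norm (\<Sum>j = l*b+1..Suc l*b. g (p j) (yh l) - g (p j) z) \<le> (\<Sum>j = l*b+1..Suc l*b. norm (g (p j) (yh l) - g (p j) z))"
      by (rule norm_sum)
    also have "\<dots> \<le> (\<Sum>j = l*b+1..Suc l*b. L * a l)"
      unfolding a_def by (rule sum_mono) (rule lip[OF inS])
    finally show "norm (\<Sum>j = l*b+1..Suc l*b. g (p j) (yh l) - g (p j) z) \<le> (\<Sum>j = l*b+1..Suc l*b. L * a l)" .
  qed simp
  also have "\<dots> = L * a l" using b1 by simp
  finally show ?thesis .
qed

lemma a_bnd:
  assumes i: "i < m"
  shows "a i \<le> norm (z - Y 0) + ka * X i + ka * L * (\<Sum>l<i. a l)"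
proof -
  have yz: "yh i - z = ((lam - c) * be ^ i) *\<^sub>R v 0 - ka *\<^sub>R (\<Sum>l<i. om i l *\<^sub>R dd l)"
    unfolding z_def om_def by (rule dyn(3))
  have Ez: "norm (z - Y 0) = c * norm (v 0)" unfolding z_def using c0 by simp
  have t1: "norm (((lam - c) * be ^ i) *\<^sub>R v 0) \<le> c * norm (v 0)"
  proof -
    have "\<bar>(lam - c) * be ^ i\<bar> = (c - lam) * be ^ i" using lamc be0 by (simp add: abs_mult)
    also have "\<dots> \<le> c * 1" using lamc lam0 be0 be c0 by (intro mult_mono power_le_one) auto
    finally show ?thesis by (simp add: mult_right_mono)
  qed
  have XX: "(\<Sum>l<m. Xw i l *\<^sub>R D l) = (\<Sum>l<i. om i l *\<^sub>R D l)"
  proof -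
    have "(\<Sum>l<m. Xw i l *\<^sub>R D l) = (\<Sum>l<i. Xw i l *\<^sub>R D l)"
      by (rule sum.mono_neutral_right) (use i in \<open>auto simp: Xw_def\<close>)
    then show ?thesis by (simp add: Xw_def)
  qed
  have t2: "norm (\<Sum>l<i. om i l *\<^sub>R dd l) \<le> X i + L * (\<Sum>l<i. a l)"
  proof -
    have "(\<Sum>l<i. om i l *\<^sub>R dd l) = (\<Sum>l<i. om i l *\<^sub>R D l) + (\<Sum>l<i. om i l *\<^sub>R (dd l - D l))"
      by (simp add: scaleR_diff_right sum_subtractf)
    then have "norm (\<Sum>l<i. om i l *\<^sub>R dd l) \<le> norm (\<Sum>l<i. om i l *\<^sub>R D l) + norm (\<Sum>l<i. om i l *\<^sub>R (dd l - D l))"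
      by (simp add: norm_triangle_ineq)
    also have "norm (\<Sum>l<i. om i l *\<^sub>R D l) = X i" unfolding X_def XX ..
    also have "norm (\<Sum>l<i. om i l *\<^sub>R (dd l - D l)) \<le> (\<Sum>l<i. L * a l)"
    proof -
      have "norm (\<Sum>l<i. om i l *\<^sub>R (dd l - D l)) \<le> (\<Sum>l<i. norm (om i l *\<^sub>R (dd l - D l)))" by (rule norm_sum)
      also have "\<dots> \<le> (\<Sum>l<i. L * a l)"
      proof (rule sum_mono)
        fix l assume "l \<in> {..<i}"
        then have lm: "l < m" using i by simp
        have "norm (om i l *\<^sub>R (dd l - D l)) = om i l * norm (dd l - D l)" using om_bnd by simp
        also have "\<dots> \<le> 1 * (L * a l)" using om_bnd dd_D[OF lm] by (intro mult_mono) auto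
        finally show "norm (om i l *\<^sub>R (dd l - D l)) \<le> L * a l" by simp
      qed
      finally show ?thesis .
    qed
    finally show ?thesis by (simp add: sum_distrib_left)
  qed
  have "a i \<le> norm (((lam - c) * be ^ i) *\<^sub>R v 0) + norm (ka *\<^sub>R (\<Sum>l<i. om i l *\<^sub>R dd l))"
    unfolding a_def yz by (rule norm_triangle_ineq4)
  also have "norm (ka *\<^sub>R (\<Sum>l<i. om i l *\<^sub>R dd l)) = ka * norm (\<Sum>l<i. om i l *\<^sub>R dd l)"
    using ka0 by simp
  also have "\<dots> \<le> ka * (X i + L * (\<Sum>l<i. a l))" using t2 ka0 by (intro mult_left_mono) auto
  finally show ?thesis using t1 Ez by (simp add: algebra_simps)
qed


lemma a0: "a i \<ge> 0" unfolding a_def by simp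

lemma T_bnd:
  "(\<Sum>i<m. a i) \<le> real m * norm (z - Y 0) + ka * (\<Sum>i<m. X i) + real m * ka * L * (\<Sum>i<m. a i)"
proof -
  have "(\<Sum>i<m. a i) \<le> (\<Sum>i<m. norm (z - Y 0) + ka * X i + ka * L * (\<Sum>l<m. a l))"
  proof (rule sum_mono)
    fix i assume i: "i \<in> {..<m}"
    then have "a i \<le> norm (z - Y 0) + ka * X i + ka * L * (\<Sum>l<i. a l)" using a_bnd by simp
    also have "(\<Sum>l<i. a l) \<le> (\<Sum>l<m. a l)"
      by (rule sum_mono2) (use i a0 in auto)
    then have "ka * L * (\<Sum>l<i. a l) \<le> ka * L * (\<Sum>l<m. a l)"
      using ka0 L by (intro mult_left_mono) auto
    finally show "a i \<le> norm (z - Y 0) + ka * X i + ka * L * (\<Sum>l<m. a l)" by simp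
  qed
  also have "\<dots> = real m * norm (z - Y 0) + ka * (\<Sum>i<m. X i) + real m * ka * L * (\<Sum>i<m. a i)"
    by (simp add: sum.distrib sum_distrib_left mult.assoc)
  finally show ?thesis .
qed

lemma S_bnd: "norm S \<le> norm M + L * (\<Sum>i<m. a i)"
proof -
  have "S = M + (\<Sum>l<m. be ^ (m - 1 - l) *\<^sub>R (dd l - D l))"
    unfolding S_def M_def by (simp add: scaleR_diff_right sum_subtractf)
  then have "norm S \<le> norm M + norm (\<Sum>l<m. be ^ (m - 1 - l) *\<^sub>R (dd l - D l))"
    by (simp add: norm_triangle_ineq)
  also have "norm (\<Sum>l<m. be ^ (m - 1 - l) *\<^sub>R (dd l - D l)) \<le> (\<Sum>l<m. L * a l)"
  proof -
    have "norm (\<Sum>l<m. be ^ (m - 1 - l) *\<^sub>R (dd l - D l)) \<le> (\<Sum>l<m. norm (be ^ (m - 1 - l) *\<^sub>R (dd l - D l)))"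
      by (rule norm_sum)
    also have "\<dots> \<le> (\<Sum>l<m. L * a l)"
    proof (rule sum_mono)
      fix l assume "l \<in> {..<m}"
      then have lm: "l < m" by simp
      have p1: "be ^ (m - 1 - l) \<le> 1" "0 \<le> be ^ (m - 1 - l)" using be0 be by (auto intro: power_le_one)
      have "norm (be ^ (m - 1 - l) *\<^sub>R (dd l - D l)) = be ^ (m - 1 - l) * norm (dd l - D l)" using p1 by simp
      also have "\<dots> \<le> 1 * (L * a l)" using p1 dd_D[OF lm] by (intro mult_mono) auto
      finally show "norm (be ^ (m - 1 - l) *\<^sub>R (dd l - D l)) \<le> L * a l" by simp
    qed
    finally show ?thesis .
  qed
  finally show ?thesis by (simp add: sum_distrib_left)
qed

lemma Y0: "Y 0 = snd s" and Yp0: "Yp 0 = fst s" unfolding Y_def Yp_def by simp_all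

lemma c1: "1 / (1 - be) = 1 + c" unfolding c_def using be by (simp add: field_simps)

lemma zz: "rrm_z be s - snd s = z - Y 0"
proof -
  have "rrm_z be s - snd s = (1 / (1 - be)) *\<^sub>R Y 0 - c *\<^sub>R Yp 0 - Y 0"
    unfolding rrm_z_def Y0 Yp0 c_def by simp
  also have "\<dots> = c *\<^sub>R v 0" unfolding c1 v_def by (simp add: algebra_simps)
  finally show ?thesis unfolding z_def by simp
qed

lemma epoch_id:
  "rrm_z be (rrm_epoch al be lam b m g p s) - snd (rrm_epoch al be lam b m g p s)
     = be ^ m *\<^sub>R (z - Y 0) - (c * al) *\<^sub>R S"
proof -
  have ep: "rrm_epoch al be lam b m g p s = (Yp m, Y m)" unfolding rrm_epoch_def Y_def Yp_def by simp
  have "rrm_z be (Yp m, Y m) - Y m = (1 / (1 - be)) *\<^sub>R Y m - c *\<^sub>R Yp m - Y m"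
    unfolding rrm_z_def c_def by simp
  also have "\<dots> = c *\<^sub>R v m" unfolding c1 v_def by (simp add: algebra_simps)
  also have "\<dots> = c *\<^sub>R (be ^ m *\<^sub>R v 0 - al *\<^sub>R S)" unfolding S_def by (subst dyn(1)) simp
  also have "\<dots> = be ^ m *\<^sub>R (z - Y 0) - (c * al) *\<^sub>R S" unfolding z_def by (simp add: algebra_simps)
  finally show ?thesis unfolding ep by simp
qed

lemma core:
  "(norm (rrm_z be (rrm_epoch al be lam b m g p s) - snd (rrm_epoch al be lam b m g p s)))\<^sup>2
   \<le> ((1 + 2 * be ^ m) / 3) * (norm (rrm_z be s - snd s))\<^sup>2
     + (be\<^sup>2 * al\<^sup>2 / ((1 - be)\<^sup>2 * (1 - be ^ m))) * (2 * (norm M)\<^sup>2 + (2 / (3 * real m)) * (\<Sum>i<m. (X i)\<^sup>2))"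
proof -
  have q0: "0 \<le> be ^ m" using be0 by simp
  have q1: "be ^ m < 1" using be0 be m1 by (simp add: power_less_one_iff)
  have cal: "c * al \<ge> 0" using c0 al0 by simp
  have "(norm (rrm_z be (rrm_epoch al be lam b m g p s) - snd (rrm_epoch al be lam b m g p s)))\<^sup>2
      \<le> be ^ m * (norm (z - Y 0))\<^sup>2 + (norm ((c * al) *\<^sub>R S))\<^sup>2 / (1 - be ^ m)"
    unfolding epoch_id by (rule convex_sq[OF q0 q1])
  also have "norm ((c * al) *\<^sub>R S) = c * al * norm S" using cal by simp
  also have "be ^ m * (norm (z - Y 0))\<^sup>2 + (c * al * norm S)\<^sup>2 / (1 - be ^ m)
     \<le> ((1 + 2 * be ^ m) / 3) * (norm (z - Y 0))\<^sup>2
       + (be\<^sup>2 * al\<^sup>2 / ((1 - be)\<^sup>2 * (1 - be ^ m))) * (2 * (norm M)\<^sup>2 + (2 / (3 * real m)) * (\<Sum>i<m. (X i)\<^sup>2))"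
  proof (rule final_real[where T="\<Sum>i<m. a i" and SX="\<Sum>i<m. X i" and L=L and ka=ka])
    show "0 \<le> (\<Sum>i<m. a i)" using a0 by (simp add: sum_nonneg)
    show "0 \<le> (\<Sum>i<m. X i)" unfolding X_def by (simp add: sum_nonneg)
    show "(\<Sum>i<m. X i)\<^sup>2 \<le> real m * (\<Sum>i<m. (X i)\<^sup>2)"
      using sum_squared_le_sum_of_squares[of X "{..<m}"] by (simp add: mult.commute)
    show "1 \<le> real m" using m1 by simp
  qed (use L al0 be0 be q0 q1 ka_def c_def al1 T_bnd S_bnd in auto)
  finally show ?thesis unfolding zz .
qed

end





definition Vsum :: "nat \<Rightarrow> nat \<Rightarrow> (nat \<Rightarrow> real) \<Rightarrow> (nat \<Rightarrow> nat) \<Rightarrow> (nat \<Rightarrow> 'a) \<Rightarrow> 'a::real_vector" where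
  "Vsum b m W \<pi> h = (\<Sum>l<m. W l *\<^sub>R ((1 / real b) *\<^sub>R (\<Sum>j = l*b+1..Suc l*b. h (\<pi> j))))"

definition XW :: "real \<Rightarrow> real \<Rightarrow> nat \<Rightarrow> nat \<Rightarrow> real" where
  "XW be lam i l = (if l < i then 1 + (lam - be / (1 - be)) * (1 - be) * be ^ (i - 1 - l) else 0)"

context rrm_ep begin
lemma z_eq: "z = rrm_z be s" using zz Y0 by simp
end

lemma epoch_bound:
  fixes g :: "nat \<Rightarrow> 'a \<Rightarrow> 'a::euclidean_space"
  assumes b1: "b \<ge> 1" and m1: "m \<ge> 1" and nbm: "n = b * m"
    and perm: "p permutes {1..n}"
    and lip: "\<And>i x y. i \<in> {1..n} \<Longrightarrow> norm (g i x - g i y) \<le> L * norm (x - y)"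
    and L: "L > 0" and be0: "0 \<le> be" and be: "be < 1"
    and lam0: "0 \<le> lam" and lam1: "lam \<le> be / (1 - be)"
    and al0: "0 < al" and al1: "al \<le> (1 - be) * (1 - be ^ m) / (4 * L * real m)"
  shows "(norm (rrm_z be (rrm_epoch al be lam b m g p s) - snd (rrm_epoch al be lam b m g p s)))\<^sup>2
   \<le> ((1 + 2 * be ^ m) / 3) * (norm (rrm_z be s - snd s))\<^sup>2
     + (be\<^sup>2 * al\<^sup>2 / ((1 - be)\<^sup>2 * (1 - be ^ m)))
       * (2 * (norm (Vsum b m (\<lambda>l. be ^ (m - 1 - l)) p (\<lambda>i. g i (rrm_z be s))))\<^sup>2
          + (2 / (3 * real m)) * (\<Sum>i<m. (norm (Vsum b m (XW be lam i) p (\<lambda>i. g i (rrm_z be s))))\<^sup>2))"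
proof -
  interpret E: rrm_ep al be lam L b m n g p s
    by unfold_locales (use assms in auto)
  have M: "E.M = Vsum b m (\<lambda>l. be ^ (m - 1 - l)) p (\<lambda>i. g i (rrm_z be s))"
    unfolding E.M_def E.D_def Vsum_def E.z_eq ..
  have X: "E.X i = norm (Vsum b m (XW be lam i) p (\<lambda>i. g i (rrm_z be s)))" for i
    unfolding E.X_def E.Xw_def E.om_def E.c_def E.D_def Vsum_def E.z_eq XW_def ..
  show ?thesis using E.core unfolding M X .
qed

lemma XW_bnd:
  assumes "0 \<le> be" "be < 1" "0 \<le> lam" "lam \<le> be / (1 - be)"
  shows "0 \<le> XW be lam i l \<and> XW be lam i l \<le> 1"
proof -
  have t1: "(lam - be / (1 - be)) * (1 - be) \<le> 0" using assms by (simp add: mult_nonpos_nonneg)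
  have t2: "(lam - be / (1 - be)) * (1 - be) \<ge> - be"
  proof -
    have "(lam - be / (1 - be)) * (1 - be) \<ge> (- (be / (1 - be))) * (1 - be)" using assms by (intro mult_right_mono) auto
    also have "(- (be / (1 - be))) * (1 - be) = - be" using assms by simp
    finally show ?thesis .
  qed
  have p1: "be ^ (i - 1 - l) \<le> 1" "0 \<le> be ^ (i - 1 - l)" using assms by (auto intro: power_le_one)
  have "(lam - be / (1 - be)) * (1 - be) * be ^ (i - 1 - l) \<ge> - be * be ^ (i - 1 - l)"
    using t2 p1 by (intro mult_right_mono) auto
  moreover have "be * be ^ (i - 1 - l) \<le> 1" using p1 assms by (simp add: mult_le_one)
  moreover have "(lam - be / (1 - be)) * (1 - be) * be ^ (i - 1 - l) \<le> 0" using t1 p1 by (simp add: mult_nonpos_nonneg)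
  ultimately show ?thesis unfolding XW_def by auto
qed

lemma seq_Suc:
  assumes "k \<ge> 1"
  shows "rrm_seq al be lam b m g perm x1 (Suc k) = rrm_epoch (al k) be lam b m g (perm k) (rrm_seq al be lam b m g perm x1 k)"
proof -
  obtain j where "k = Suc j" using assms by (cases k) auto
  then show ?thesis by simp
qed

lemma seq_upd:
  "k' \<le> k \<Longrightarrow> rrm_seq al be lam b m g (perm(k := p)) x1 k' = rrm_seq al be lam b m g perm x1 k'"
proof (induction k')
  case 0 then show ?case by simp
next
  case (Suc k')
  show ?case
  proof (cases k')
    case 0 then show ?thesis by simp
  next
    case (Suc j)
    then have "Suc j < k" using Suc.prems by simp
    then show ?thesis using Suc Suc.IH Suc.prems by simp
  qed
qed



lemma Vbound_a':
  fixes h :: "nat \<Rightarrow> 'a::real_inner"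
  assumes "n = b * m" "b \<ge> 1" "m \<ge> 1" "\<pi> permutes {1..n}" "\<And>l. l < m \<Longrightarrow> 0 \<le> W l \<and> W l \<le> 1"
  shows "(norm (Vsum b m W \<pi> h))\<^sup>2 \<le> (real m)\<^sup>2 * ((1 / real n) * (\<Sum>i=1..n. (norm (h i))\<^sup>2))"
  using Vbound_a[of b m \<pi> W h] assms unfolding Vsum_def by simp

lemma Vbound_b':
  fixes h :: "nat \<Rightarrow> 'a::real_inner"
  assumes "n = b * m" "b \<ge> 1" "m \<ge> 1" "\<And>l. l < m \<Longrightarrow> 0 \<le> W l \<and> W l \<le> 1"
  shows "(\<Sum>\<pi>\<in>{\<pi>. \<pi> permutes {1..n}}. (norm (Vsum b m W \<pi> h))\<^sup>2)
       \<le> real (card {\<pi>. \<pi> permutes {1..n}}) * ((real m)\<^sup>2 * (norm ((1 / real n) *\<^sub>R (\<Sum>i=1..n. h i)))\<^sup>2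
          + (real m / real b) * ((1 / real n) * (\<Sum>i=1..n. (norm (h i))\<^sup>2)))"
  using Vbound_b[of b m W h] assms unfolding Vsum_def by simp

theorem lemmaB4:
  fixes f :: "nat \<Rightarrow> 'a::euclidean_space \<Rightarrow> real"
    and g :: "nat \<Rightarrow> 'a \<Rightarrow> 'a"
    and n b m :: nat
    and L fbar beta lam :: real
    and alpha :: "nat \<Rightarrow> real"
    and perm :: "nat \<Rightarrow> nat \<Rightarrow> nat"
    and x1 :: 'a
  assumes n_pos: "n \<ge> 1" and b_pos: "b \<ge> 1" and nbm: "n = b * m"
    and grad: "\<And>i x. i \<in> {1..n} \<Longrightarrow> (f i has_derivative (\<lambda>h. g i x \<bullet> h)) (at x)"
    and L_pos: "L > 0"
    and lip: "\<And>i x y. i \<in> {1..n} \<Longrightarrow> norm (g i x - g i y) \<le> L * norm (x - y)"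
    and lowb: "\<And>i x. i \<in> {1..n} \<Longrightarrow> f i x \<ge> fbar"
    and beta: "0 \<le> beta" "beta < 1"
    and lam: "0 \<le> lam" "lam \<le> beta / (1 - beta)"
    and step: "\<And>k. k \<ge> 1 \<Longrightarrow> 0 < alpha k \<and>
                   alpha k \<le> (1 - beta) * (1 - beta ^ m) / (4 * L * real m)"
    and perms: "\<And>k. perm k permutes {1..n}"
  shows
   "(\<forall>k\<ge>1.
      (let sk = rrm_seq alpha beta lam b m g perm x1 k;
           sk1 = rrm_seq alpha beta lam b m g perm x1 (Suc k);
           zk = rrm_z beta sk;
           gradf = (1 / real n) *\<^sub>R (\<Sum>i=1..n. g i zk);
           fz = (1 / real n) * (\<Sum>i=1..n. f i zk);
           eta = (1 + 2 * beta ^ m) / 3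
       in (norm (rrm_z beta sk1 - snd sk1))\<^sup>2
          \<le> eta * (norm (zk - snd sk))\<^sup>2
            + beta\<^sup>2 * (real m)\<^sup>2 * (alpha k)\<^sup>2 * (4 * (norm gradf)\<^sup>2 + 7 * L * (fz - fbar))
              / ((1 - beta)\<^sup>2 * (1 - beta ^ m))))
    \<and>
    (\<forall>k\<ge>1.
      (let sk = rrm_seq alpha beta lam b m g perm x1 k;
           zk = rrm_z beta sk;
           gradf = (1 / real n) *\<^sub>R (\<Sum>i=1..n. g i zk);
           fz = (1 / real n) * (\<Sum>i=1..n. f i zk);
           eta = (1 + 2 * beta ^ m) / 3;
           P = {p. p permutes {1..n}}
       in (1 / real (card P)) *
            (\<Sum>p\<in>P. (let sk1 = rrm_seq alpha beta lam b m g (perm(k := p)) x1 (Suc k)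
                       in (norm (rrm_z beta sk1 - snd sk1))\<^sup>2))
          \<le> eta * (norm (zk - snd sk))\<^sup>2
            + beta\<^sup>2 * (real m)\<^sup>2 * (alpha k)\<^sup>2
                * (4 * (norm gradf)\<^sup>2 + 7 * L * (fz - fbar) / real n)
              / ((1 - beta)\<^sup>2 * (1 - beta ^ m))))"
proof -
  have m1: "m \<ge> 1" using n_pos nbm by (cases m) auto
  have q1: "beta ^ m < 1" using beta m1 by (simp add: power_less_one_iff)
  have q0: "0 \<le> beta ^ m" using beta by simp
  have rn: "real n = real b * real m" using nbm by simp
  have Mw: "\<And>l. l < m \<Longrightarrow> 0 \<le> beta ^ (m - 1 - l) \<and> beta ^ (m - 1 - l) \<le> (1::real)"
    using beta by (auto intro: power_le_one)
  have Xw: "\<And>l. l < m \<Longrightarrow> 0 \<le> XW beta lam i l \<and> XW beta lam i l \<le> 1" for i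
    using XW_bnd[OF beta lam] by blast
  have Qb: "(1 / real n) * (\<Sum>i=1..n. (norm (g i z))\<^sup>2) \<le> 2 * L * ((1 / real n) * (\<Sum>i=1..n. f i z) - fbar)" for z
  proof -
    have "(\<Sum>i=1..n. (norm (g i z))\<^sup>2) \<le> (\<Sum>i=1..n. 2 * L * (f i z - fbar))"
    proof (rule sum_mono)
      fix i assume i: "i \<in> {1..n}"
      show "(norm (g i z))\<^sup>2 \<le> 2 * L * (f i z - fbar)"
        by (rule grad_bound[where F="f i" and G="g i"]) (use grad[OF i] lip[OF i] L_pos lowb[OF i] in auto)
    qed
    also have "\<dots> = 2 * L * ((\<Sum>i=1..n. f i z) - real n * fbar)"
      by (simp add: sum_distrib_left sum_subtractf algebra_simps)
    finally show ?thesis using n_pos by (simp add: field_simps)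
  qed
  have fzb: "(1 / real n) * (\<Sum>i=1..n. f i z) - fbar \<ge> 0" for z
  proof -
    have "(\<Sum>i=1..n. fbar) \<le> (\<Sum>i=1..n. f i z)" using lowb by (intro sum_mono) auto
    then show ?thesis using n_pos by (simp add: field_simps)
  qed
  have EB: "\<And>k p s. k \<ge> 1 \<Longrightarrow> p permutes {1..n} \<Longrightarrow>
     (norm (rrm_z beta (rrm_epoch (alpha k) beta lam b m g p s) - snd (rrm_epoch (alpha k) beta lam b m g p s)))\<^sup>2
   \<le> ((1 + 2 * beta ^ m) / 3) * (norm (rrm_z beta s - snd s))\<^sup>2
     + (beta\<^sup>2 * (alpha k)\<^sup>2 / ((1 - beta)\<^sup>2 * (1 - beta ^ m)))
       * (2 * (norm (Vsum b m (\<lambda>l. beta ^ (m - 1 - l)) p (\<lambda>i. g i (rrm_z beta s))))\<^sup>2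
          + (2 / (3 * real m)) * (\<Sum>i<m. (norm (Vsum b m (XW beta lam i) p (\<lambda>i. g i (rrm_z beta s))))\<^sup>2))"
    by (rule epoch_bound[OF b_pos m1 nbm _ lip L_pos beta lam]) (use step in auto)
  have A0: "beta\<^sup>2 * (alpha k)\<^sup>2 / ((1 - beta)\<^sup>2 * (1 - beta ^ m)) \<ge> 0" for k
    using q1 by simp
  show ?thesis
  proof (intro conjI allI impI, goal_cases)
    case (1 k)
    then have k: "k \<ge> 1" by simp
    define s where "s = rrm_seq alpha beta lam b m g perm x1 k"
    define z where "z = rrm_z beta s"
    define Q where "Q = (1 / real n) * (\<Sum>i=1..n. (norm (g i z))\<^sup>2)"
    define fz where "fz = (1 / real n) * (\<Sum>i=1..n. f i z)"
    define gf where "gf = (1 / real n) *\<^sub>R (\<Sum>i=1..n. g i z)"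
    define A where "A = beta\<^sup>2 * (alpha k)\<^sup>2 / ((1 - beta)\<^sup>2 * (1 - beta ^ m))"
    define E2 where "E2 = (norm (z - snd s))\<^sup>2"
    have QL: "Q \<le> 2 * L * (fz - fbar)" unfolding Q_def fz_def by (rule Qb)
    have f0: "fz - fbar \<ge> 0" unfolding fz_def by (rule fzb)
    have A0': "A \<ge> 0" unfolding A_def by (rule A0)
    have RHS: "beta\<^sup>2 * (real m)\<^sup>2 * (alpha k)\<^sup>2 * Z / ((1 - beta)\<^sup>2 * (1 - beta ^ m)) = A * ((real m)\<^sup>2 * Z)" for Z
      unfolding A_def by (simp add: field_simps)
    show ?case
    proof -
      define MM where "MM = Vsum b m (\<lambda>l. beta ^ (m - 1 - l)) (perm k) (\<lambda>i. g i z)"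
      define XX where "XX i = Vsum b m (XW beta lam i) (perm k) (\<lambda>i. g i z)" for i
      have ep: "rrm_seq alpha beta lam b m g perm x1 (Suc k) = rrm_epoch (alpha k) beta lam b m g (perm k) s"
        unfolding s_def by (rule seq_Suc[OF k])
      have c: "(norm (rrm_z beta (rrm_seq alpha beta lam b m g perm x1 (Suc k)) - snd (rrm_seq alpha beta lam b m g perm x1 (Suc k))))\<^sup>2
          \<le> ((1 + 2 * beta ^ m) / 3) * E2 + A * (2 * (norm MM)\<^sup>2 + (2 / (3 * real m)) * (\<Sum>i<m. (norm (XX i))\<^sup>2))"
        unfolding ep E2_def A_def MM_def XX_def z_def using EB[OF k perms] .
      have Mb: "(norm MM)\<^sup>2 \<le> (real m)\<^sup>2 * Q"
        unfolding MM_def Q_def by (rule Vbound_a'[OF nbm b_pos m1 perms Mw])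
      have Xb: "(norm (XX i))\<^sup>2 \<le> (real m)\<^sup>2 * Q" for i
        unfolding XX_def Q_def by (rule Vbound_a'[OF nbm b_pos m1 perms Xw])
      have "(\<Sum>i<m. (norm (XX i))\<^sup>2) \<le> (\<Sum>i<m. (real m)\<^sup>2 * Q)" using Xb by (intro sum_mono)
      then have SXb: "(2 / (3 * real m)) * (\<Sum>i<m. (norm (XX i))\<^sup>2) \<le> (2 / 3) * ((real m)\<^sup>2 * Q)"
        using m1 by (simp add: field_simps)
      have br: "2 * (norm MM)\<^sup>2 + (2 / (3 * real m)) * (\<Sum>i<m. (norm (XX i))\<^sup>2)
            \<le> (real m)\<^sup>2 * (4 * (norm gf)\<^sup>2 + 7 * L * (fz - fbar))"
      proof -
        have "2 * (norm MM)\<^sup>2 + (2 / (3 * real m)) * (\<Sum>i<m. (norm (XX i))\<^sup>2) \<le> (8 / 3) * ((real m)\<^sup>2 * Q)"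
          using Mb SXb by linarith
        also have "\<dots> \<le> (8 / 3) * ((real m)\<^sup>2 * (2 * L * (fz - fbar)))"
          using QL by (intro mult_left_mono) auto
        also have "\<dots> \<le> (real m)\<^sup>2 * (4 * (norm gf)\<^sup>2 + 7 * L * (fz - fbar))"
        proof -
          have "(16 / 3) * (L * (fz - fbar)) \<le> 7 * (L * (fz - fbar))" using L_pos f0 by simp
          then have "(16 / 3) * (L * (fz - fbar)) \<le> 4 * (norm gf)\<^sup>2 + 7 * L * (fz - fbar)" by simp
          then have "(real m)\<^sup>2 * ((16 / 3) * (L * (fz - fbar))) \<le> (real m)\<^sup>2 * (4 * (norm gf)\<^sup>2 + 7 * L * (fz - fbar))"
            by (intro mult_left_mono) auto
          moreover have "(8 / 3) * ((real m)\<^sup>2 * (2 * L * (fz - fbar))) = (real m)\<^sup>2 * ((16 / 3) * (L * (fz - fbar)))"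
            by (simp add: algebra_simps)
          ultimately show ?thesis by simp
        qed
        finally show ?thesis .
      qed
      have "(norm (rrm_z beta (rrm_seq alpha beta lam b m g perm x1 (Suc k)) - snd (rrm_seq alpha beta lam b m g perm x1 (Suc k))))\<^sup>2
          \<le> ((1 + 2 * beta ^ m) / 3) * E2 + A * ((real m)\<^sup>2 * (4 * (norm gf)\<^sup>2 + 7 * L * (fz - fbar)))"
        using c br A0' by (meson add_left_mono mult_left_mono order_trans)
      then show ?case
        unfolding Let_def RHS s_def[symmetric] z_def[symmetric] gf_def[symmetric] fz_def[symmetric] E2_def .
    qed
  next
    case (2 k)
    then have k: "k \<ge> 1" by simp
    define s where "s = rrm_seq alpha beta lam b m g perm x1 k"
    define z where "z = rrm_z beta s"
    define Q where "Q = (1 / real n) * (\<Sum>i=1..n. (norm (g i z))\<^sup>2)"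
    define fz where "fz = (1 / real n) * (\<Sum>i=1..n. f i z)"
    define gf where "gf = (1 / real n) *\<^sub>R (\<Sum>i=1..n. g i z)"
    define A where "A = beta\<^sup>2 * (alpha k)\<^sup>2 / ((1 - beta)\<^sup>2 * (1 - beta ^ m))"
    define E2 where "E2 = (norm (z - snd s))\<^sup>2"
    define P where "P = {p. p permutes {1..n::nat}}"
    define cP where "cP = real (card P)"
    define B where "B = (real m)\<^sup>2 * (norm gf)\<^sup>2 + (real m / real b) * Q"
    define MM where "MM p = Vsum b m (\<lambda>l. beta ^ (m - 1 - l)) p (\<lambda>i. g i z)" for p
    define XX where "XX p i = Vsum b m (XW beta lam i) p (\<lambda>i. g i z)" for p i
    define LH where "LH p = (norm (rrm_z beta (rrm_seq alpha beta lam b m g (perm(k := p)) x1 (Suc k))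
                 - snd (rrm_seq alpha beta lam b m g (perm(k := p)) x1 (Suc k))))\<^sup>2" for p
    have QL: "Q \<le> 2 * L * (fz - fbar)" unfolding Q_def fz_def by (rule Qb)
    have f0: "fz - fbar \<ge> 0" unfolding fz_def by (rule fzb)
    have A0': "A \<ge> 0" unfolding A_def by (rule A0)
    have finP: "finite P" unfolding P_def by (rule finite_permutations) simp
    have cP0: "cP > 0" unfolding cP_def 
    proof -
      have "id \<in> P" unfolding P_def by (simp add: permutes_id)
      then show "real (card P) > 0" using finP by (auto simp: card_gt_0_iff)
    qed
    have RHS: "beta\<^sup>2 * (real m)\<^sup>2 * (alpha k)\<^sup>2 * Z / ((1 - beta)\<^sup>2 * (1 - beta ^ m)) = A * ((real m)\<^sup>2 * Z)" for Z
      unfolding A_def by (simp add: field_simps)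
    have each: "LH p \<le> ((1 + 2 * beta ^ m) / 3) * E2 + A * (2 * (norm (MM p))\<^sup>2 + (2 / (3 * real m)) * (\<Sum>i<m. (norm (XX p i))\<^sup>2))"
      if p: "p \<in> P" for p
    proof -
      have pp: "p permutes {1..n}" using p unfolding P_def by simp
      have ep: "rrm_seq alpha beta lam b m g (perm(k := p)) x1 (Suc k) = rrm_epoch (alpha k) beta lam b m g p s"
        using seq_Suc[OF k, of alpha beta lam b m g "perm(k := p)" x1] seq_upd[of k k alpha beta lam b m g perm p x1]
        unfolding s_def by simp
      show ?thesis unfolding LH_def ep E2_def A_def MM_def XX_def z_def using EB[OF k pp] .
    qed
    have sumM: "(\<Sum>p\<in>P. (norm (MM p))\<^sup>2) \<le> cP * B"
      unfolding MM_def P_def cP_def B_def Q_def gf_def by (rule Vbound_b'[OF nbm b_pos m1 Mw])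
    have sumX: "(\<Sum>p\<in>P. (norm (XX p i))\<^sup>2) \<le> cP * B" for i
      unfolding XX_def P_def cP_def B_def Q_def gf_def by (rule Vbound_b'[OF nbm b_pos m1 Xw])
    have "(\<Sum>p\<in>P. LH p) \<le> (\<Sum>p\<in>P. ((1 + 2 * beta ^ m) / 3) * E2 + A * (2 * (norm (MM p))\<^sup>2 + (2 / (3 * real m)) * (\<Sum>i<m. (norm (XX p i))\<^sup>2)))"
      using each by (rule sum_mono)
    also have "\<dots> = cP * (((1 + 2 * beta ^ m) / 3) * E2) + A * (2 * (\<Sum>p\<in>P. (norm (MM p))\<^sup>2) + (2 / (3 * real m)) * (\<Sum>i<m. \<Sum>p\<in>P. (norm (XX p i))\<^sup>2))"
      unfolding cP_def by (simp add: sum.distrib sum_distrib_left sum.swap[of _ P] algebra_simps)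
    also have "\<dots> \<le> cP * (((1 + 2 * beta ^ m) / 3) * E2) + A * (2 * (cP * B) + (2 / (3 * real m)) * (\<Sum>i<m. cP * B))"
    proof -
      have "(\<Sum>i<m. \<Sum>p\<in>P. (norm (XX p i))\<^sup>2) \<le> (\<Sum>i<m. cP * B)" using sumX by (intro sum_mono)
      then show ?thesis using sumM A0' m1 by (intro add_left_mono mult_left_mono add_mono) auto
    qed
    also have "\<dots> = cP * (((1 + 2 * beta ^ m) / 3) * E2 + A * ((8 / 3) * B))"
      using m1 by (simp add: field_simps)
    finally have tot: "(\<Sum>p\<in>P. LH p) \<le> cP * (((1 + 2 * beta ^ m) / 3) * E2 + A * ((8 / 3) * B))" .
    have avg: "(1 / cP) * (\<Sum>p\<in>P. LH p) \<le> ((1 + 2 * beta ^ m) / 3) * E2 + A * ((8 / 3) * B)"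
      using tot cP0 by (simp add: field_simps)
    have Bb: "(8 / 3) * B \<le> (real m)\<^sup>2 * (4 * (norm gf)\<^sup>2 + 7 * L * (fz - fbar) / real n)"
    proof -
      have mb: "real m / real b = (real m)\<^sup>2 / real n" using rn m1 b_pos by (simp add: power2_eq_square field_simps)
      have mb0: "real m / real b \<ge> 0" by simp
      have "(8 / 3) * ((real m / real b) * Q) \<le> (8 / 3) * ((real m / real b) * (2 * L * (fz - fbar)))"
        using QL mb0 by (intro mult_left_mono) auto
      also have "\<dots> = (16 / 3) * ((real m)\<^sup>2 / real n) * (L * (fz - fbar))" unfolding mb by simp
      also have "\<dots> \<le> 7 * ((real m)\<^sup>2 / real n) * (L * (fz - fbar))"
        using L_pos f0 by (intro mult_right_mono) auto
      finally have t: "(8 / 3) * ((real m / real b) * Q) \<le> 7 * ((real m)\<^sup>2 / real n) * (L * (fz - fbar))" .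
      have t2: "(8 / 3) * ((real m)\<^sup>2 * (norm gf)\<^sup>2) \<le> 4 * ((real m)\<^sup>2 * (norm gf)\<^sup>2)" by simp
      have e1: "(real m)\<^sup>2 * (4 * (norm gf)\<^sup>2 + 7 * L * (fz - fbar) / real n)
          = 4 * ((real m)\<^sup>2 * (norm gf)\<^sup>2) + 7 * ((real m)\<^sup>2 / real n) * (L * (fz - fbar))"
        by (simp add: algebra_simps)
      have e2: "(8 / 3) * B = (8 / 3) * ((real m)\<^sup>2 * (norm gf)\<^sup>2) + (8 / 3) * ((real m / real b) * Q)"
        unfolding B_def by (simp add: algebra_simps)
      show ?thesis unfolding e1 e2 using t t2 by linarith
    qed
    have fin: "(1 / cP) * (\<Sum>p\<in>P. LH p) \<le> ((1 + 2 * beta ^ m) / 3) * E2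
        + A * ((real m)\<^sup>2 * (4 * (norm gf)\<^sup>2 + 7 * L * (fz - fbar) / real n))"
      using avg Bb A0' by (meson add_left_mono mult_left_mono order_trans)
    show ?case
      unfolding Let_def RHS s_def[symmetric] z_def[symmetric] gf_def[symmetric] fz_def[symmetric] E2_def[symmetric]
        P_def[symmetric] cP_def[symmetric] LH_def[symmetric]
      by (rule fin)
  qed
qed


end
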